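(* Let $m,n\ge 1$, $1\le r\le mn$, let $\mathcal{B}=\mathcal{B}(m,n;r)$ and let $G$ be the symmetry group acting on $\mathcal{B}$. Fix a division of the cells of the $m\times n$ grid into labelled regions such that every element of $G$ maps each region onto a region, and let board partitions be taken with respect to this division. Suppose a subset $\overline{\mathcal{B}}\subseteq\mathcal{B}$ satisfies: (1) $\overline{\mathcal{B}}$ is a disjoint union of sets $\pi_1,\dots,\pi_t$, where each $\pi_i$ is the set of all boards in $\mathcal{B}$ having some fixed board partition; (2) every board $B\in\mathcal{B}$ is equivalent under $G$ to some $B'\in\overline{\mathcal{B}}$; (3) if $B,B'\in\overline{\mathcal{B}}$ are equivalent under $G$, then they have the same board partition (and hence both lie in the same $\pi_i$). For each $1\le i\le t$ let $K_i=\{g\in G: g\cdot\pi_i=\pi_i\}$ be the subgroup of symmetries preserving the set $\pi_i$. Then \[|\mathcal{B}(m,n;r)|=\sum_{i=1}^t|\pi_i|\cdot[G:K_i].\]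
   Context: Consider a rectangular grid with $m$ rows and $n$ columns of unit square cells. For $1\le r\le mn$, $\mathcal{B}(m,n;r)$ is the set of all ways to choose exactly $r$ of the $mn$ cells to be "blocked"; each such choice is called a board (so $|\mathcal{B}(m,n;r)|=\binom{mn}{r}$). Symmetries of the rectangle permute the cells and hence act on boards. The symmetry group $G$ is: the dihedral group $D_4$ of order 8 (rotations by $0,90,180,270$ degrees and reflections across the horizontal midline, vertical midline and both diagonals) if $m=n>1$; the group $\langle H,V\rangle=\{R_0,H,V,R_{180}\}$ (identity, reflections across the horizontal and vertical midlines, rotation by 180 degrees) if $m\ne n$ and $m,n>1$; and $\langle R_{180}\rangle$ if exactly one of $m,n$ equals 1. Two boards $B,B'$ are equivalent under $G$ if $g\cdot B=B'$ for some $g\in G$. Given a division of the grid into labelled disjoint regions, the board partition of a board is the ordered tuple giving the number of blocked cells of the board lying in each region. *)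

theory Defs
  imports Main
begin

type_synonym cell = "nat \<times> nat"

definition cells :: "nat \<Rightarrow> nat \<Rightarrow> cell set" where
  "cells m n = {0..<m} \<times> {0..<n}"

text \<open>Boards: sets of exactly r blocked cells.\<close>
definition boards :: "nat \<Rightarrow> nat \<Rightarrow> nat \<Rightarrow> cell set set" where
  "boards m n r = {B. B \<subseteq> cells m n \<and> card B = r}"

text \<open>A map on cells, restricted to the grid (identity outside), so group
  elements are permutations of the grid's cells.\<close>
definition on_grid :: "nat \<Rightarrow> nat \<Rightarrow> (cell \<Rightarrow> cell) \<Rightarrow> cell \<Rightarrow> cell" where
  "on_grid m n f = (\<lambda>c. if c \<in> cells m n then f c else c)"

definition symR0 :: "nat \<Rightarrow> nat \<Rightarrow> cell \<Rightarrow> cell" where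
  "symR0 m n = on_grid m n (\<lambda>(i,j). (i,j))"
definition symH :: "nat \<Rightarrow> nat \<Rightarrow> cell \<Rightarrow> cell" where
  "symH m n = on_grid m n (\<lambda>(i,j). (m - 1 - i, j))"
definition symV :: "nat \<Rightarrow> nat \<Rightarrow> cell \<Rightarrow> cell" where
  "symV m n = on_grid m n (\<lambda>(i,j). (i, n - 1 - j))"
definition symR180 :: "nat \<Rightarrow> nat \<Rightarrow> cell \<Rightarrow> cell" where
  "symR180 m n = on_grid m n (\<lambda>(i,j). (m - 1 - i, n - 1 - j))"
text \<open>Square case only (m = n).\<close>
definition symR90 :: "nat \<Rightarrow> nat \<Rightarrow> cell \<Rightarrow> cell" where
  "symR90 m n = on_grid m n (\<lambda>(i,j). (j, n - 1 - i))"
definition symR270 :: "nat \<Rightarrow> nat \<Rightarrow> cell \<Rightarrow> cell" where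
  "symR270 m n = on_grid m n (\<lambda>(i,j). (n - 1 - j, i))"
definition symD :: "nat \<Rightarrow> nat \<Rightarrow> cell \<Rightarrow> cell" where
  "symD m n = on_grid m n (\<lambda>(i,j). (j, i))"
definition symD' :: "nat \<Rightarrow> nat \<Rightarrow> cell \<Rightarrow> cell" where
  "symD' m n = on_grid m n (\<lambda>(i,j). (n - 1 - j, m - 1 - i))"

text \<open>For m = n = 1 (not covered by the paper's case split) we use
  the group generated by R180, which acts trivially.\<close>
definition symgroup :: "nat \<Rightarrow> nat \<Rightarrow> (cell \<Rightarrow> cell) set" where
  "symgroup m n =
     (if m = n \<and> m > 1 then
        {symR0 m n, symR90 m n, symR180 m n, symR270 m n,
         symH m n, symV m n, symD m n, symD' m n}
      else if m > 1 \<and> n > 1 then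
        {symR0 m n, symH m n, symV m n, symR180 m n}
      else {symR0 m n, symR180 m n})"

definition act :: "(cell \<Rightarrow> cell) \<Rightarrow> cell set \<Rightarrow> cell set" where
  "act g B = g ` B"

definition equivalent :: "nat \<Rightarrow> nat \<Rightarrow> cell set \<Rightarrow> cell set \<Rightarrow> bool" where
  "equivalent m n B B' \<longleftrightarrow> (\<exists>g\<in>symgroup m n. act g B = B')"

text \<open>Division into labelled regions: region c is the label of cell c.
  The region with label l is the set of cells of the grid carrying label l.\<close>
definition region_cells :: "nat \<Rightarrow> nat \<Rightarrow> (cell \<Rightarrow> 'l) \<Rightarrow> 'l \<Rightarrow> cell set" where
  "region_cells m n region l = {c \<in> cells m n. region c = l}"

definition board_partition :: "(cell \<Rightarrow> 'l) \<Rightarrow> cell set \<Rightarrow> 'l \<Rightarrow> nat" where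
  "board_partition region B = (\<lambda>l. card {c \<in> B. region c = l})"

definition boards_with_partition ::
    "nat \<Rightarrow> nat \<Rightarrow> nat \<Rightarrow> (cell \<Rightarrow> 'l) \<Rightarrow> ('l \<Rightarrow> nat) \<Rightarrow> cell set set" where
  "boards_with_partition m n r region p =
     {B \<in> boards m n r. board_partition region B = p}"

definition set_stabilizer :: "nat \<Rightarrow> nat \<Rightarrow> cell set set \<Rightarrow> (cell \<Rightarrow> cell) set" where
  "set_stabilizer m n P = {g \<in> symgroup m n. act g ` P = P}"

end

theory Submission
  imports Defs
begin

lemmas symdefs = symR0_def symR90_def symR180_def symR270_def symH_def symV_def
  symD_def symD'_def on_grid_def cells_def

lemma [simp]: "symR0 m n \<circ> symR0 m n = symR0 m n"
  by (rule ext) (auto simp: symdefs)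
lemma [simp]: "symR0 n n \<circ> symR90 n n = symR90 n n"
  by (rule ext) (auto simp: symdefs)
lemma [simp]: "symR0 m n \<circ> symR180 m n = symR180 m n"
  by (rule ext) (auto simp: symdefs)
lemma [simp]: "symR0 n n \<circ> symR270 n n = symR270 n n"
  by (rule ext) (auto simp: symdefs)
lemma [simp]: "symR0 m n \<circ> symH m n = symH m n"
  by (rule ext) (auto simp: symdefs)
lemma [simp]: "symR0 m n \<circ> symV m n = symV m n"
  by (rule ext) (auto simp: symdefs)
lemma [simp]: "symR0 n n \<circ> symD n n = symD n n"
  by (rule ext) (auto simp: symdefs)
lemma [simp]: "symR0 n n \<circ> symD' n n = symD' n n"
  by (rule ext) (auto simp: symdefs)
lemma [simp]: "symR90 n n \<circ> symR0 n n = symR90 n n"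
  by (rule ext) (auto simp: symdefs)
lemma [simp]: "symR90 n n \<circ> symR90 n n = symR180 n n"
  by (rule ext) (auto simp: symdefs)
lemma [simp]: "symR90 n n \<circ> symR180 n n = symR270 n n"
  by (rule ext) (auto simp: symdefs)
lemma [simp]: "symR90 n n \<circ> symR270 n n = symR0 n n"
  by (rule ext) (auto simp: symdefs)
lemma [simp]: "symR90 n n \<circ> symH n n = symD n n"
  by (rule ext) (auto simp: symdefs)
lemma [simp]: "symR90 n n \<circ> symV n n = symD' n n"
  by (rule ext) (auto simp: symdefs)
lemma [simp]: "symR90 n n \<circ> symD n n = symV n n"
  by (rule ext) (auto simp: symdefs)
lemma [simp]: "symR90 n n \<circ> symD' n n = symH n n"
  by (rule ext) (auto simp: symdefs)
lemma [simp]: "symR180 m n \<circ> symR0 m n = symR180 m n"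
  by (rule ext) (auto simp: symdefs)
lemma [simp]: "symR180 n n \<circ> symR90 n n = symR270 n n"
  by (rule ext) (auto simp: symdefs)
lemma [simp]: "symR180 m n \<circ> symR180 m n = symR0 m n"
  by (rule ext) (auto simp: symdefs)
lemma [simp]: "symR180 n n \<circ> symR270 n n = symR90 n n"
  by (rule ext) (auto simp: symdefs)
lemma [simp]: "symR180 m n \<circ> symH m n = symV m n"
  by (rule ext) (auto simp: symdefs)
lemma [simp]: "symR180 m n \<circ> symV m n = symH m n"
  by (rule ext) (auto simp: symdefs)
lemma [simp]: "symR180 n n \<circ> symD n n = symD' n n"
  by (rule ext) (auto simp: symdefs)
lemma [simp]: "symR180 n n \<circ> symD' n n = symD n n"
  by (rule ext) (auto simp: symdefs)
lemma [simp]: "symR270 n n \<circ> symR0 n n = symR270 n n"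
  by (rule ext) (auto simp: symdefs)
lemma [simp]: "symR270 n n \<circ> symR90 n n = symR0 n n"
  by (rule ext) (auto simp: symdefs)
lemma [simp]: "symR270 n n \<circ> symR180 n n = symR90 n n"
  by (rule ext) (auto simp: symdefs)
lemma [simp]: "symR270 n n \<circ> symR270 n n = symR180 n n"
  by (rule ext) (auto simp: symdefs)
lemma [simp]: "symR270 n n \<circ> symH n n = symD' n n"
  by (rule ext) (auto simp: symdefs)
lemma [simp]: "symR270 n n \<circ> symV n n = symD n n"
  by (rule ext) (auto simp: symdefs)
lemma [simp]: "symR270 n n \<circ> symD n n = symH n n"
  by (rule ext) (auto simp: symdefs)
lemma [simp]: "symR270 n n \<circ> symD' n n = symV n n"
  by (rule ext) (auto simp: symdefs)
lemma [simp]: "symH m n \<circ> symR0 m n = symH m n"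
  by (rule ext) (auto simp: symdefs)
lemma [simp]: "symH n n \<circ> symR90 n n = symD' n n"
  by (rule ext) (auto simp: symdefs)
lemma [simp]: "symH m n \<circ> symR180 m n = symV m n"
  by (rule ext) (auto simp: symdefs)
lemma [simp]: "symH n n \<circ> symR270 n n = symD n n"
  by (rule ext) (auto simp: symdefs)
lemma [simp]: "symH m n \<circ> symH m n = symR0 m n"
  by (rule ext) (auto simp: symdefs)
lemma [simp]: "symH m n \<circ> symV m n = symR180 m n"
  by (rule ext) (auto simp: symdefs)
lemma [simp]: "symH n n \<circ> symD n n = symR270 n n"
  by (rule ext) (auto simp: symdefs)
lemma [simp]: "symH n n \<circ> symD' n n = symR90 n n"
  by (rule ext) (auto simp: symdefs)
lemma [simp]: "symV m n \<circ> symR0 m n = symV m n"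
  by (rule ext) (auto simp: symdefs)
lemma [simp]: "symV n n \<circ> symR90 n n = symD n n"
  by (rule ext) (auto simp: symdefs)
lemma [simp]: "symV m n \<circ> symR180 m n = symH m n"
  by (rule ext) (auto simp: symdefs)
lemma [simp]: "symV n n \<circ> symR270 n n = symD' n n"
  by (rule ext) (auto simp: symdefs)
lemma [simp]: "symV m n \<circ> symH m n = symR180 m n"
  by (rule ext) (auto simp: symdefs)
lemma [simp]: "symV m n \<circ> symV m n = symR0 m n"
  by (rule ext) (auto simp: symdefs)
lemma [simp]: "symV n n \<circ> symD n n = symR90 n n"
  by (rule ext) (auto simp: symdefs)
lemma [simp]: "symV n n \<circ> symD' n n = symR270 n n"
  by (rule ext) (auto simp: symdefs)
lemma [simp]: "symD n n \<circ> symR0 n n = symD n n"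
  by (rule ext) (auto simp: symdefs)
lemma [simp]: "symD n n \<circ> symR90 n n = symH n n"
  by (rule ext) (auto simp: symdefs)
lemma [simp]: "symD n n \<circ> symR180 n n = symD' n n"
  by (rule ext) (auto simp: symdefs)
lemma [simp]: "symD n n \<circ> symR270 n n = symV n n"
  by (rule ext) (auto simp: symdefs)
lemma [simp]: "symD n n \<circ> symH n n = symR90 n n"
  by (rule ext) (auto simp: symdefs)
lemma [simp]: "symD n n \<circ> symV n n = symR270 n n"
  by (rule ext) (auto simp: symdefs)
lemma [simp]: "symD n n \<circ> symD n n = symR0 n n"
  by (rule ext) (auto simp: symdefs)
lemma [simp]: "symD n n \<circ> symD' n n = symR180 n n"
  by (rule ext) (auto simp: symdefs)
lemma [simp]: "symD' n n \<circ> symR0 n n = symD' n n"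
  by (rule ext) (auto simp: symdefs)
lemma [simp]: "symD' n n \<circ> symR90 n n = symV n n"
  by (rule ext) (auto simp: symdefs)
lemma [simp]: "symD' n n \<circ> symR180 n n = symD n n"
  by (rule ext) (auto simp: symdefs)
lemma [simp]: "symD' n n \<circ> symR270 n n = symH n n"
  by (rule ext) (auto simp: symdefs)
lemma [simp]: "symD' n n \<circ> symH n n = symR270 n n"
  by (rule ext) (auto simp: symdefs)
lemma [simp]: "symD' n n \<circ> symV n n = symR90 n n"
  by (rule ext) (auto simp: symdefs)
lemma [simp]: "symD' n n \<circ> symD n n = symR180 n n"
  by (rule ext) (auto simp: symdefs)
lemma [simp]: "symD' n n \<circ> symD' n n = symR0 n n"
  by (rule ext) (auto simp: symdefs)

lemma R0_id: "symR0 m n = id"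
  by (rule ext) (auto simp: symdefs)

lemma G_sq: "m = n \<and> 1 < m \<Longrightarrow> symgroup m n = {symR0 n n, symR90 n n, symR180 n n, symR270 n n,
         symH n n, symV n n, symD n n, symD' n n}"
  by (simp add: symgroup_def)
lemma G_kl: "\<not> (m = n \<and> 1 < m) \<Longrightarrow> 1 < m \<and> 1 < n \<Longrightarrow> symgroup m n = {symR0 m n, symH m n, symV m n, symR180 m n}"
  unfolding symgroup_def by (rule trans[OF if_not_P if_P])
lemma G_dg: "\<not> (m = n \<and> 1 < m) \<Longrightarrow> \<not> (1 < m \<and> 1 < n) \<Longrightarrow> symgroup m n = {symR0 m n, symR180 m n}"
  unfolding symgroup_def by (rule trans[OF if_not_P if_not_P])

lemma G_cases:
  assumes "symgroup m n = {symR0 n n, symR90 n n, symR180 n n, symR270 n n,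
         symH n n, symV n n, symD n n, symD' n n} \<Longrightarrow> m = n \<Longrightarrow> P"
  and "symgroup m n = {symR0 m n, symH m n, symV m n, symR180 m n} \<Longrightarrow> P"
  and "symgroup m n = {symR0 m n, symR180 m n} \<Longrightarrow> P"
  shows P
proof (cases "m = n \<and> 1 < m")
  case True
  then have "m = n" by simp
  show P by (rule assms(1)[OF G_sq[OF True] \<open>m = n\<close>])
next
  case False
  show P
  proof (cases "1 < m \<and> 1 < n")
    case True
    show P by (rule assms(2)[OF G_kl[OF False True]])
  next
    case F2: False
    show P by (rule assms(3)[OF G_dg[OF False F2]])
  qed
qed

lemma sq_closed: "g \<in> {symR0 n n, symR90 n n, symR180 n n, symR270 n n, symH n n, symV n n, symD n n, symD' n n} \<Longrightarrow> h \<in> {symR0 n n, symR90 n n, symR180 n n, symR270 n n, symH n n, symV n n, symD n n, symD' n n} \<Longrightarrow> g \<circ> h \<in> {symR0 n n, symR90 n n, symR180 n n, symR270 n n, symH n n, symV n n, symD n n, symD' n n}"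
  by (elim insertE emptyE; simp)

lemma kl_closed: "g \<in> {symR0 m n, symH m n, symV m n, symR180 m n} \<Longrightarrow> h \<in> {symR0 m n, symH m n, symV m n, symR180 m n} \<Longrightarrow> g \<circ> h \<in> {symR0 m n, symH m n, symV m n, symR180 m n}"
  by (elim insertE emptyE; simp)

lemma dg_closed: "g \<in> {symR0 m n, symR180 m n} \<Longrightarrow> h \<in> {symR0 m n, symR180 m n} \<Longrightarrow> g \<circ> h \<in> {symR0 m n, symR180 m n}"
  by (elim insertE emptyE; simp)

lemma sq_inv: "g \<in> {symR0 n n, symR90 n n, symR180 n n, symR270 n n, symH n n, symV n n, symD n n, symD' n n} \<Longrightarrow> \<exists>h\<in>{symR0 n n, symR90 n n, symR180 n n, symR270 n n, symH n n, symV n n, symD n n, symD' n n}. h \<circ> g = symR0 n n \<and> g \<circ> h = symR0 n n"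
  by (elim insertE emptyE; simp)

lemma kl_inv: "g \<in> {symR0 m n, symH m n, symV m n, symR180 m n} \<Longrightarrow> \<exists>h\<in>{symR0 m n, symH m n, symV m n, symR180 m n}. h \<circ> g = symR0 m n \<and> g \<circ> h = symR0 m n"
  by (elim insertE emptyE; simp)

lemma dg_inv: "g \<in> {symR0 m n, symR180 m n} \<Longrightarrow> \<exists>h\<in>{symR0 m n, symR180 m n}. h \<circ> g = symR0 m n \<and> g \<circ> h = symR0 m n"
  by (elim insertE emptyE; simp)

lemma sym_closed: assumes g: "g \<in> symgroup m n" and h: "h \<in> symgroup m n"
  shows "g \<circ> h \<in> symgroup m n"
proof (rule G_cases[of m n])
  assume A: "symgroup m n = {symR0 n n, symR90 n n, symR180 n n, symR270 n n, symH n n, symV n n, symD n n, symD' n n}" "m = n"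
  show ?thesis using g h unfolding A(1) by (rule sq_closed)
next
  assume A: "symgroup m n = {symR0 m n, symH m n, symV m n, symR180 m n}"
  show ?thesis using g h unfolding A by (rule kl_closed)
next
  assume A: "symgroup m n = {symR0 m n, symR180 m n}"
  show ?thesis using g h unfolding A by (rule dg_closed)
qed

lemma sym_inv0: assumes g: "g \<in> symgroup m n"
  shows "\<exists>h\<in>symgroup m n. h \<circ> g = symR0 m n \<and> g \<circ> h = symR0 m n"
proof (rule G_cases[of m n])
  assume A: "symgroup m n = {symR0 n n, symR90 n n, symR180 n n, symR270 n n, symH n n, symV n n, symD n n, symD' n n}" "m = n"
  have "g \<in> {symR0 n n, symR90 n n, symR180 n n, symR270 n n, symH n n, symV n n, symD n n, symD' n n}" using g unfolding A(1) .
  from sq_inv[OF this] show ?thesis unfolding A(1) using A(2) by (simp only:)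
next
  assume A: "symgroup m n = {symR0 m n, symH m n, symV m n, symR180 m n}"
  show ?thesis using g unfolding A by (rule kl_inv)
next
  assume A: "symgroup m n = {symR0 m n, symR180 m n}"
  show ?thesis using g unfolding A by (rule dg_inv)
qed

lemma sym_inv: "g \<in> symgroup m n \<Longrightarrow> \<exists>h\<in>symgroup m n. h \<circ> g = id \<and> g \<circ> h = id"
  using sym_inv0[of g m n] by (simp add: R0_id)

lemma sym_id: "id \<in> symgroup m n"
  by (auto simp: symgroup_def R0_id[symmetric])

lemma [simp]: "c \<in> cells m n \<Longrightarrow> symR0 m n c \<in> cells m n"
  by (cases c) (auto simp: symdefs)
lemma [simp]: "c \<in> cells m n \<Longrightarrow> symH m n c \<in> cells m n"
  by (cases c) (auto simp: symdefs)
lemma [simp]: "c \<in> cells m n \<Longrightarrow> symV m n c \<in> cells m n"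
  by (cases c) (auto simp: symdefs)
lemma [simp]: "c \<in> cells m n \<Longrightarrow> symR180 m n c \<in> cells m n"
  by (cases c) (auto simp: symdefs)
lemma [simp]: "c \<in> cells n n \<Longrightarrow> symR90 n n c \<in> cells n n"
  by (cases c) (auto simp: symdefs)
lemma [simp]: "c \<in> cells n n \<Longrightarrow> symR270 n n c \<in> cells n n"
  by (cases c) (auto simp: symdefs)
lemma [simp]: "c \<in> cells n n \<Longrightarrow> symD n n c \<in> cells n n"
  by (cases c) (auto simp: symdefs)
lemma [simp]: "c \<in> cells n n \<Longrightarrow> symD' n n c \<in> cells n n"
  by (cases c) (auto simp: symdefs)

lemma sym_cells: assumes g: "g \<in> symgroup m n" and c: "c \<in> cells m n" shows "g c \<in> cells m n"
proof (rule G_cases[of m n])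
  assume A: "symgroup m n = {symR0 n n, symR90 n n, symR180 n n, symR270 n n, symH n n, symV n n, symD n n, symD' n n}" "m = n"
  have "g \<in> {symR0 n n, symR90 n n, symR180 n n, symR270 n n, symH n n, symV n n, symD n n, symD' n n}" using g unfolding A(1) .
  moreover have "c \<in> cells n n" using c unfolding A(2) .
  ultimately show ?thesis unfolding A(2) by (elim insertE emptyE; simp)
next
  assume A: "symgroup m n = {symR0 m n, symH m n, symV m n, symR180 m n}"
  show ?thesis using g c unfolding A by (elim insertE emptyE; simp)
next
  assume A: "symgroup m n = {symR0 m n, symR180 m n}"
  show ?thesis using g c unfolding A by (elim insertE emptyE; simp)
qed

lemma sym_inj: "g \<in> symgroup m n \<Longrightarrow> inj g"
  using sym_inv[of g m n] by (metis comp_apply id_apply injI)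


lemma img_img_comp: "(`) (g \<circ> h) ` S = (`) g ` ((`) h ` S)"
  by (auto simp: image_comp image_image)

lemma orbit_count:
  fixes G :: "('a \<Rightarrow> 'a) set" and X :: "'a set set" and f :: "'a set \<Rightarrow> 'p"
  assumes finG: "finite G" and idG: "id \<in> G"
    and comp: "\<And>g h. g \<in> G \<Longrightarrow> h \<in> G \<Longrightarrow> g \<circ> h \<in> G"
    and inv: "\<And>g. g \<in> G \<Longrightarrow> \<exists>h\<in>G. h \<circ> g = id \<and> g \<circ> h = id"
    and finX: "finite X"
    and closed: "\<And>g B. g \<in> G \<Longrightarrow> B \<in> X \<Longrightarrow> g ` B \<in> X"
    and resp: "\<And>k B B'. k \<in> G \<Longrightarrow> B \<in> X \<Longrightarrow> B' \<in> X \<Longrightarrow> f B = f B' \<Longrightarrow> f (k ` B) = f (k ` B')"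
    and Pdef: "P = {B \<in> X. f B = q}"
  shows "card (\<Union>g\<in>G. (`) g ` P) = card P * (card G div card {g \<in> G. (`) g ` P = P})"
proof -
  define Orb where "Orb = (\<lambda>g. (`) g ` P) ` G"
  define K where "K = {g \<in> G. (`) g ` P = P}"
  have finP: "finite P" using finX Pdef by simp
  have cancel: "g ` (g' ` C) = C" if "g \<circ> g' = id" for g g' :: "'a \<Rightarrow> 'a" and C
    using that unfolding image_comp by simp
  have desc: "(`) g ` P = {C \<in> X. f (g' ` C) = q}"
    if "g \<in> G" "g' \<in> G" "g' \<circ> g = id" "g \<circ> g' = id" for g g'
  proof
    show "(`) g ` P \<subseteq> {C \<in> X. f (g' ` C) = q}"
    proof
      fix C assume "C \<in> (`) g ` P"
      then obtain B where B: "B \<in> P" "C = g ` B" by auto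
      have "g' ` C = B" using B(2) cancel[OF that(3)] by simp
      moreover have "C \<in> X" using B closed[OF that(1)] Pdef by simp
      ultimately show "C \<in> {C \<in> X. f (g' ` C) = q}" using B(1) Pdef by simp
    qed
    show "{C \<in> X. f (g' ` C) = q} \<subseteq> (`) g ` P"
    proof
      fix C assume C: "C \<in> {C \<in> X. f (g' ` C) = q}"
      have "g ` (g' ` C) = C" using cancel[OF that(4)] .
      moreover have "g' ` C \<in> P" using C closed[OF that(2)] Pdef by simp
      ultimately show "C \<in> (`) g ` P" by (metis image_eqI)
    qed
  qed
  have half: "f (h' ` C) = q"
    if "g \<in> G" "g' \<in> G" "g' \<circ> g = id" "g \<circ> g' = id"
       "h \<in> G" "h' \<in> G" "h' \<circ> h = id" "h \<circ> h' = id"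
       "C0 \<in> X" "f (g' ` C0) = q" "f (h' ` C0) = q" "C \<in> X" "f (g' ` C) = q"
     for g g' h h' C0 C
  proof -
    have k: "h' \<circ> g \<in> G" using comp that(6,1) by blast
    have X1: "g' ` C \<in> X" using closed that(2,12) by blast
    have X2: "g' ` C0 \<in> X" using closed that(2,9) by blast
    have "f ((h' \<circ> g) ` (g' ` C)) = f ((h' \<circ> g) ` (g' ` C0))"
      using resp[OF k X1 X2] that(10,13) by simp
    moreover have "(h' \<circ> g) ` (g' ` C) = h' ` (g ` (g' ` C))" by (simp add: image_image)
    then have "(h' \<circ> g) ` (g' ` C) = h' ` C" by (simp only: cancel[OF that(4)])
    moreover have "(h' \<circ> g) ` (g' ` C0) = h' ` (g ` (g' ` C0))" by (simp add: image_image)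
    then have "(h' \<circ> g) ` (g' ` C0) = h' ` C0" by (simp only: cancel[OF that(4)])
    ultimately show ?thesis using that(11) by simp
  qed
  have disj: "(`) g ` P = (`) h ` P" if T: "g \<in> G" "h \<in> G" "(`) g ` P \<inter> (`) h ` P \<noteq> {}" for g h
  proof -
    obtain g' where g': "g' \<in> G" "g' \<circ> g = id" "g \<circ> g' = id" using inv T(1) by blast
    obtain h' where h': "h' \<in> G" "h' \<circ> h = id" "h \<circ> h' = id" using inv T(2) by blast
    have Dg: "(`) g ` P = {C \<in> X. f (g' ` C) = q}" using desc[OF T(1) g'] .
    have Dh: "(`) h ` P = {C \<in> X. f (h' ` C) = q}" using desc[OF T(2) h'] .
    obtain C0 where C0: "C0 \<in> X" "f (g' ` C0) = q" "f (h' ` C0) = q"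
      using T(3) unfolding Dg Dh by blast
    have "\<And>C. C \<in> X \<Longrightarrow> f (g' ` C) = q \<Longrightarrow> f (h' ` C) = q"
      using half[OF T(1) g' T(2) h' C0] by blast
    moreover have "\<And>C. C \<in> X \<Longrightarrow> f (h' ` C) = q \<Longrightarrow> f (g' ` C) = q"
      using half[OF T(2) h' T(1) g' C0(1) C0(3) C0(2)] by blast
    ultimately show ?thesis unfolding Dg Dh by blast
  qed
  have injg: "inj g" if gG: "g \<in> G" for g
  proof -
    obtain h where hg: "h \<circ> g = id" using inv[OF gG] by blast
    show ?thesis by (rule inj_on_inverseI[where g=h]) (simp add: pointfree_idE hg)
  qed
  have cardeq: "card ((`) g ` P) = card P" if "g \<in> G" for g
  proof (rule card_image)
    show "inj_on ((`) g) P" using injg[OF that] by (simp add: inj_on_def inj_image_eq_iff)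
  qed
  have finOrb: "finite Orb" using finG by (simp add: Orb_def)
  have cardU: "card (\<Union>Orb) = card Orb * card P"
  proof -
    have pw: "pairwise disjnt Orb"
      unfolding pairwise_def disjnt_def Orb_def using disj by blast
    have "card (\<Union>Orb) = sum card Orb"
      by (rule card_Union_disjoint[OF pw]) (auto simp: Orb_def finP)
    also have "\<dots> = sum (\<lambda>_. card P) Orb" by (rule sum.cong) (auto simp: Orb_def cardeq)
    finally show ?thesis by simp
  qed
  have fiber: "card {h \<in> G. (`) h ` P = (`) g ` P} = card K" if gG: "g \<in> G" for g
  proof -
    obtain g' where g': "g' \<in> G" "g' \<circ> g = id" "g \<circ> g' = id" using inv gG by blast
    have "bij_betw (\<lambda>h. g' \<circ> h) {h \<in> G. (`) h ` P = (`) g ` P} K"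
    proof (rule bij_betw_byWitness[where f'="\<lambda>k. g \<circ> k"])
      show "\<forall>a\<in>{h \<in> G. (`) h ` P = (`) g ` P}. g \<circ> (g' \<circ> a) = a"
        using g' by (simp add: o_assoc)
      show "\<forall>a\<in>K. g' \<circ> (g \<circ> a) = a"
        using g' by (simp add: o_assoc)
      show "(\<circ>) g' ` {h \<in> G. (`) h ` P = (`) g ` P} \<subseteq> K"
      proof
        fix x assume "x \<in> (\<circ>) g' ` {h \<in> G. (`) h ` P = (`) g ` P}"
        then obtain h where h: "h \<in> G" "(`) h ` P = (`) g ` P" "x = g' \<circ> h" by blast
        have "(`) x ` P = (`) g' ` ((`) g ` P)" by (simp only: h(3) img_img_comp h(2))
        also have "\<dots> = (`) (g' \<circ> g) ` P" by (simp only: img_img_comp)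
        also have "\<dots> = P" using g' by simp
        finally show "x \<in> K" using comp g' h unfolding K_def by blast
      qed
      show "(\<circ>) g ` K \<subseteq> {h \<in> G. (`) h ` P = (`) g ` P}"
      proof
        fix x assume "x \<in> (\<circ>) g ` K"
        then obtain k where k: "k \<in> G" "(`) k ` P = P" "x = g \<circ> k" unfolding K_def by blast
        have "(`) x ` P = (`) g ` P" by (simp only: k(3) img_img_comp k(2))
        then show "x \<in> {h \<in> G. (`) h ` P = (`) g ` P}" using comp gG k by blast
      qed
    qed
    then show ?thesis by (rule bij_betw_same_card)
  qed
  have cardG: "card G = card Orb * card K"
  proof -
    have Geq: "G = (\<Union>Y\<in>Orb. {h \<in> G. (`) h ` P = Y})" unfolding Orb_def by blast
    have "card (\<Union>Y\<in>Orb. {h \<in> G. (`) h ` P = Y}) = (\<Sum>Y\<in>Orb. card {h \<in> G. (`) h ` P = Y})"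
      by (rule card_UN_disjoint) (use finOrb finG in auto)
    then have "card G = (\<Sum>Y\<in>Orb. card {h \<in> G. (`) h ` P = Y})" using Geq by simp
    also have "\<dots> = (\<Sum>Y\<in>Orb. card K)" by (rule sum.cong) (auto simp: Orb_def fiber)
    finally show ?thesis by simp
  qed
  have "id \<in> K" using idG by (simp add: K_def)
  then have "card K > 0" using finG by (auto simp: K_def card_gt_0_iff)
  then have "card G div card K = card Orb" using cardG by simp
  then show ?thesis using cardU by (simp add: Orb_def K_def)
qed

lemma bp_img:
  assumes rp: "\<forall>g\<in>symgroup m n. \<forall>l\<in>region ` cells m n. \<exists>l'\<in>region ` cells m n.
          g ` region_cells m n region l = region_cells m n region l'"
    and k: "k \<in> symgroup m n" and B: "B \<subseteq> cells m n" and c0: "c0 \<in> cells m n"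
  shows "board_partition region (k ` B) (region (k c0)) = board_partition region B (region c0)"
proof -
  obtain l' where l': "k ` region_cells m n region (region c0) = region_cells m n region l'"
    using rp k c0 by blast
  have "k c0 \<in> region_cells m n region l'" using l' c0 by (auto simp: region_cells_def)
  then have l'eq: "l' = region (k c0)" by (simp add: region_cells_def)
  have inj: "inj k" using sym_inj k by blast
  have eqv: "region (k c) = region (k c0) \<longleftrightarrow> region c = region c0" if c: "c \<in> cells m n" for c
  proof
    assume "region c = region c0"
    then have "k c \<in> k ` region_cells m n region (region c0)" using c by (auto simp: region_cells_def)
    then show "region (k c) = region (k c0)" using l' l'eq by (simp add: region_cells_def)
  next
    assume "region (k c) = region (k c0)"
    then have "k c \<in> region_cells m n region l'" using l'eq sym_cells[OF k c] by (simp add: region_cells_def)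
    then obtain c' where "c' \<in> region_cells m n region (region c0)" "k c = k c'" using l' by force
    then show "region c = region c0" using inj by (auto simp: region_cells_def dest: injD)
  qed
  have "{c \<in> k ` B. region c = region (k c0)} = k ` {c \<in> B. region c = region c0}"
    using eqv B by auto
  moreover have "card (k ` {c \<in> B. region c = region c0}) = card {c \<in> B. region c = region c0}"
    using inj by (meson card_image inj_on_subset subset_UNIV)
  ultimately show ?thesis by (simp add: board_partition_def)
qed

lemma bp_img0:
  assumes k: "k \<in> symgroup m n" and B: "B \<subseteq> cells m n"
    and no: "\<forall>c\<in>cells m n. region (k c) \<noteq> l"
  shows "board_partition region (k ` B) l = 0"
proof -
  have "{c \<in> k ` B. region c = l} = {}" using assms sym_cells by blast
  then show ?thesis unfolding board_partition_def by (metis card.empty)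
qed

lemma bp_resp:
  assumes rp: "\<forall>g\<in>symgroup m n. \<forall>l\<in>region ` cells m n. \<exists>l'\<in>region ` cells m n.
          g ` region_cells m n region l = region_cells m n region l'"
    and k: "k \<in> symgroup m n" and B: "B \<subseteq> cells m n" and B': "B' \<subseteq> cells m n"
    and eq: "board_partition region B = board_partition region B'"
  shows "board_partition region (k ` B) = board_partition region (k ` B')"
proof
  fix l
  show "board_partition region (k ` B) l = board_partition region (k ` B') l"
  proof (cases "\<exists>c\<in>cells m n. region (k c) = l")
    case True
    then obtain c0 where c0: "c0 \<in> cells m n" "l = region (k c0)" by auto
    show ?thesis using bp_img[OF rp k B c0(1)] bp_img[OF rp k B' c0(1)] eq c0 by simp
  next
    case False
    then have nf: "\<forall>c\<in>cells m n. region (k c) \<noteq> l" by blast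
    show ?thesis using bp_img0[OF k B nf] bp_img0[OF k B' nf] by simp
  qed
qed

lemma finite_boards: "finite (boards m n r)"
proof -
  have "boards m n r \<subseteq> Pow (cells m n)" by (auto simp: boards_def)
  moreover have "finite (cells m n)" by (simp add: cells_def)
  ultimately show ?thesis by (meson finite_Pow_iff finite_subset)
qed

lemma boards_closed: "g \<in> symgroup m n \<Longrightarrow> B \<in> boards m n r \<Longrightarrow> g ` B \<in> boards m n r"
  using sym_cells[of g m n] sym_inj[of g m n]
  by (auto simp: boards_def card_image inj_on_subset)

lemma act_eq: "act = (`)"
  by (rule ext)+ (simp add: act_def)

theorem theorem3p1:
  fixes m n r t :: nat
    and region :: "cell \<Rightarrow> 'l"
    and p :: "nat \<Rightarrow> 'l \<Rightarrow> nat"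
    and Bbar :: "cell set set"
  assumes "1 \<le> m" and "1 \<le> n" and "1 \<le> r" and "r \<le> m * n"
    and regions_preserved:
      "\<forall>g\<in>symgroup m n. \<forall>l\<in>region ` cells m n. \<exists>l'\<in>region ` cells m n.
          g ` region_cells m n region l = region_cells m n region l'"
    and union: "Bbar = (\<Union>i\<in>{1..t}. boards_with_partition m n r region (p i))"
    and disjoint: "\<forall>i\<in>{1..t}. \<forall>j\<in>{1..t}. i \<noteq> j \<longrightarrow>
          boards_with_partition m n r region (p i) \<inter>
          boards_with_partition m n r region (p j) = {}"
    and covers: "\<forall>B\<in>boards m n r. \<exists>B'\<in>Bbar. equivalent m n B B'"
    and same_partition: "\<forall>B\<in>Bbar. \<forall>B'\<in>Bbar. equivalent m n B B' \<longrightarrow>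
          board_partition region B = board_partition region B'"
  shows "card (boards m n r) =
    (\<Sum>i=1..t. card (boards_with_partition m n r region (p i)) *
       (card (symgroup m n) div
        card (set_stabilizer m n (boards_with_partition m n r region (p i)))))"
proof -
  let ?G = "symgroup m n" and ?X = "boards m n r"
  let ?P = "\<lambda>i. boards_with_partition m n r region (p i)"
  define U where "U = (\<lambda>i. \<Union>g\<in>?G. (`) g ` ?P i)"
  have finG: "finite ?G" by (simp add: symgroup_def)
  have cnt: "card (U i) = card (?P i) * (card ?G div card (set_stabilizer m n (?P i)))" for i
    unfolding U_def set_stabilizer_def act_eq
  proof (rule orbit_count[where X="?X" and f="board_partition region" and q="p i"])
    show "finite ?G" by (rule finG)
    show "id \<in> ?G" by (rule sym_id)
    show "\<And>g h. g \<in> ?G \<Longrightarrow> h \<in> ?G \<Longrightarrow> g \<circ> h \<in> ?G" by (rule sym_closed)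
    show "\<And>g. g \<in> ?G \<Longrightarrow> \<exists>h\<in>?G. h \<circ> g = id \<and> g \<circ> h = id" by (rule sym_inv)
    show "finite ?X" by (rule finite_boards)
    show "\<And>g B. g \<in> ?G \<Longrightarrow> B \<in> ?X \<Longrightarrow> g ` B \<in> ?X" by (rule boards_closed)
    show "\<And>k B B'. k \<in> ?G \<Longrightarrow> B \<in> ?X \<Longrightarrow> B' \<in> ?X \<Longrightarrow>
       board_partition region B = board_partition region B' \<Longrightarrow>
       board_partition region (k ` B) = board_partition region (k ` B')"
      using bp_resp[OF regions_preserved] by (auto simp: boards_def)
    show "?P i = {B \<in> ?X. board_partition region B = p i}"
      by (simp add: boards_with_partition_def)
  qed
  have Pin: "?P i \<subseteq> ?X" for i by (auto simp: boards_with_partition_def)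
  have cover: "?X = (\<Union>i\<in>{1..t}. U i)"
  proof
    show "?X \<subseteq> (\<Union>i\<in>{1..t}. U i)"
    proof
      fix B assume B: "B \<in> ?X"
      then obtain B' g where B': "B' \<in> Bbar" "g \<in> ?G" "g ` B = B'"
        using covers by (auto simp: equivalent_def act_def)
      then obtain i where i: "i \<in> {1..t}" "B' \<in> ?P i" using union by auto
      obtain h where h: "h \<in> ?G" "h \<circ> g = id" using sym_inv B' by blast
      have "h ` B' = h ` (g ` B)" using B'(3) by simp
      also have "\<dots> = B" unfolding image_comp h(2) by simp
      finally have "h ` B' = B" .
      then show "B \<in> (\<Union>i\<in>{1..t}. U i)" using i h unfolding U_def by blast
    qed
    show "(\<Union>i\<in>{1..t}. U i) \<subseteq> ?X"
      using Pin boards_closed unfolding U_def by blast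
  qed
  have disjU: "U i \<inter> U j = {}" if ij: "i \<in> {1..t}" "j \<in> {1..t}" "i \<noteq> j" for i j
  proof (rule ccontr)
    assume "U i \<inter> U j \<noteq> {}"
    then obtain g h B B' where gh: "g \<in> ?G" "h \<in> ?G" "B \<in> ?P i" "B' \<in> ?P j" "g ` B = h ` B'"
      unfolding U_def by blast
    obtain h' where h': "h' \<in> ?G" "h' \<circ> h = id" using sym_inv gh by blast
    have "(h' \<circ> g) ` B = h' ` (g ` B)" by (simp only: image_comp)
    also have "\<dots> = h' ` (h ` B')" using gh(5) by simp
    also have "\<dots> = B'" unfolding image_comp h'(2) by simp
    finally have "(h' \<circ> g) ` B = B'" .
    moreover have "h' \<circ> g \<in> ?G" using sym_closed h' gh by blast
    ultimately have "equivalent m n B B'" unfolding equivalent_def act_def by blast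
    moreover have "B \<in> Bbar" "B' \<in> Bbar" using union gh ij by auto
    ultimately have "board_partition region B = board_partition region B'"
      using same_partition by blast
    then have "B \<in> ?P j" using gh Pin by (auto simp: boards_with_partition_def)
    then show False using disjoint ij gh by blast
  qed
  have finU: "finite (U i)" if "i \<in> {1..t}" for i
    using cover that by (intro finite_subset[OF _ finite_boards]) blast
  have "card ?X = (\<Sum>i=1..t. card (U i))"
    unfolding cover by (rule card_UN_disjoint) (use finU disjU in auto)
  then show ?thesis using cnt by simp
qed

end
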